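(* Let $m,n,p,c$ be positive integers. The number of lattice paths from $(0,0)$ to $(m-pn,m+n)$ using the steps $(1,1)$ and $(-p,1)$ in the plane that do not intersect the line $x=c$ equals $|\mathcal{L}_{p,c+pn-m}(0,0;n,m)|$, the number of lattice paths from $(0,0)$ to $(n,m)$ with unit steps $(1,0)$ and $(0,1)$ that stay strictly above the line $y=px-(c+pn-m)$.
   Context: A path with steps $(1,1)$ and $(-p,1)$ is regarded as the polygonal curve formed by its steps; it intersects the line $x=c$ if it touches or crosses that line. A path with steps $(1,0),(0,1)$ stays strictly above the line $y=px-v$ if every lattice point $(x,y)$ on it satisfies $y>px-v$. *)

theory Defs
  imports Main "HOL.Real"
begin

text \<open>A lattice path starting at (0,0) is encoded as a list of step labels (bool);
  a step function maps each label to the actual step vector.\<close>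

definition pstep :: "nat \<Rightarrow> bool \<Rightarrow> int \<times> int" where
  "pstep p b = (if b then (1, 1) else (- int p, 1))"

definition ustep :: "bool \<Rightarrow> int \<times> int" where
  "ustep b = (if b then (1, 0) else (0, 1))"

definition vtx :: "(bool \<Rightarrow> int \<times> int) \<Rightarrow> bool list \<Rightarrow> nat \<Rightarrow> int \<times> int" where
  "vtx f xs k = ((\<Sum>i<k. fst (f (xs ! i))), (\<Sum>i<k. snd (f (xs ! i))))"

definition paths_to :: "(bool \<Rightarrow> int \<times> int) \<Rightarrow> int \<times> int \<Rightarrow> bool list set" where
  "paths_to f e = {xs. vtx f xs (length xs) = e}"

definition meets_vline :: "(bool \<Rightarrow> int \<times> int) \<Rightarrow> int \<Rightarrow> bool list \<Rightarrow> bool" where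
  "meets_vline f c xs \<longleftrightarrow>
     (\<exists>k\<le>length xs. fst (vtx f xs k) = c) \<or>
     (\<exists>i<length xs. \<exists>t::real. 0 \<le> t \<and> t \<le> 1 \<and>
        (1 - t) * real_of_int (fst (vtx f xs i)) + t * real_of_int (fst (vtx f xs (Suc i)))
          = real_of_int c)"

definition Lpaths :: "nat \<Rightarrow> int \<Rightarrow> nat \<Rightarrow> nat \<Rightarrow> bool list set" where
  "Lpaths p v n m = {xs \<in> paths_to ustep (int n, int m).
      \<forall>k\<le>length xs. snd (vtx ustep xs k) > int p * fst (vtx ustep xs k) - v}"

end

theory Submission
  imports Defs
begin

definition ct :: "bool list \<Rightarrow> int" where "ct xs = int (length (filter id xs))"
definition cf :: "bool list \<Rightarrow> int" where "cf xs = int (length (filter Not xs))"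

lemma ct_cf_len: "ct xs + cf xs = int (length xs)"
  unfolding ct_def cf_def by (induction xs) auto

lemma sum_take:
  fixes g :: "bool \<Rightarrow> int"
  assumes "k \<le> length xs"
  shows "(\<Sum>i<k. g (xs ! i)) = sum_list (map g (take k xs))"
proof -
  have "sum_list (map g (take k xs)) = (\<Sum>i = 0..<length (map g (take k xs)). (map g (take k xs)) ! i)"
    by (rule sum_list_sum_nth)
  also have "\<dots> = (\<Sum>i<k. g (xs ! i))"
    using assms by (intro sum.cong) auto
  finally show ?thesis by simp
qed

lemma vtx_take:
  assumes "k \<le> length xs"
  shows "vtx f xs k = (sum_list (map (\<lambda>b. fst (f b)) (take k xs)),
                       sum_list (map (\<lambda>b. snd (f b)) (take k xs)))"
  unfolding vtx_def using sum_take[OF assms, where g="\<lambda>b. fst (f b)"] sum_take[OF assms, where g="\<lambda>b. snd (f b)"] by simp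

lemma sum_pstep_fst: "sum_list (map (\<lambda>b. fst (pstep p b)) ys) = ct ys - int p * cf ys"
  by (induction ys) (auto simp: pstep_def ct_def cf_def algebra_simps)
lemma sum_pstep_snd: "sum_list (map (\<lambda>b. snd (pstep p b)) ys) = ct ys + cf ys"
  by (induction ys) (auto simp: pstep_def ct_def cf_def algebra_simps)
lemma sum_ustep_fst: "sum_list (map (\<lambda>b. fst (ustep b)) ys) = ct ys"
  by (induction ys) (auto simp: ustep_def ct_def cf_def algebra_simps)
lemma sum_ustep_snd: "sum_list (map (\<lambda>b. snd (ustep b)) ys) = cf ys"
  by (induction ys) (auto simp: ustep_def ct_def cf_def algebra_simps)

lemma vtx0: "fst (vtx f xs 0) = 0"
  by (simp add: vtx_def)

lemma seg_lt:
  fixes a b C :: int and t :: real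
  assumes "a < C" "b < C" "0 \<le> t" "t \<le> 1"
  shows "(1 - t) * real_of_int a + t * real_of_int b < real_of_int C"
proof -
  have "(1 - t) * real_of_int a \<le> (1 - t) * (real_of_int C - 1)"
    using assms by (intro mult_left_mono) auto
  moreover have "t * real_of_int b \<le> t * (real_of_int C - 1)"
    using assms by (intro mult_left_mono) auto
  ultimately show ?thesis by (simp add: algebra_simps)
qed

lemma meets_iff:
  assumes "0 < c"
  shows "(\<not> meets_vline f c xs) \<longleftrightarrow> (\<forall>k\<le>length xs. fst (vtx f xs k) < c)"
proof
  assume nm: "\<not> meets_vline f c xs"
  show "\<forall>k\<le>length xs. fst (vtx f xs k) < c"
  proof (intro allI impI)
    fix k assume "k \<le> length xs"
    then show "fst (vtx f xs k) < c"
    proof (induction k)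
      case 0 then show ?case using assms by (simp add: vtx0)
    next
      case (Suc k)
      define a where "a = fst (vtx f xs k)"
      define b where "b = fst (vtx f xs (Suc k))"
      have a: "a < c" using Suc a_def by simp
      have "b \<noteq> c" using nm Suc.prems unfolding meets_vline_def b_def by blast
      moreover have "\<not> b > c"
      proof
        assume bc: "b > c"
        define t :: real where "t = (real_of_int c - a) / (real_of_int b - a)"
        have pos: "real_of_int b - a > 0" using a bc by simp
        have "0 \<le> t" "t \<le> 1" using a bc pos unfolding t_def by (auto simp: field_simps)
        moreover have "(1 - t) * real_of_int a + t * real_of_int b = real_of_int c"
        proof -
          have "t * (real_of_int b - a) = real_of_int c - a" using pos unfolding t_def by simp
          then show ?thesis by (simp add: algebra_simps)
        qed
        ultimately show False using nm Suc.prems unfolding meets_vline_def a_def b_def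
          by (metis Suc_le_lessD)
      qed
      ultimately show ?case unfolding b_def by simp
    qed
  qed
next
  assume all: "\<forall>k\<le>length xs. fst (vtx f xs k) < c"
  show "\<not> meets_vline f c xs"
    unfolding meets_vline_def
  proof (intro notI, elim disjE exE conjE)
    fix k assume "k \<le> length xs" "fst (vtx f xs k) = c" then show False using all by force
  next
    fix i t assume i: "i < length xs" and t: "0 \<le> t" "t \<le> 1"
      and eq: "(1 - t) * real_of_int (fst (vtx f xs i)) + t * real_of_int (fst (vtx f xs (Suc i))) = real_of_int c"
    have "fst (vtx f xs i) < c" "fst (vtx f xs (Suc i)) < c" using all i by auto
    from seg_lt[OF this t] eq show False by simp
  qed
qed

definition PA where "PA p m n c = {xs. length xs = m + n \<and> ct xs = int m \<and>
   (\<forall>j\<le>m+n. ct (take j xs) - int p * cf (take j xs) < int c)}"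
definition PB where "PB p m n c = {ys. length ys = m + n \<and> ct ys = int n \<and>
   (\<forall>k\<le>m+n. cf (take k ys) > int p * ct (take k ys) - (int c + int p * int n - int m))}"

lemma A_eq:
  assumes "0 < p" "0 < c"
  shows "{xs \<in> paths_to (pstep p) (int m - int p * int n, int m + int n).
                 \<not> meets_vline (pstep p) (int c) xs} = PA p m n c"
proof -
  have end_iff: "vtx (pstep p) xs (length xs) = (int m - int p * int n, int m + int n)
     \<longleftrightarrow> length xs = m + n \<and> ct xs = int m" for xs
  proof -
    have "vtx (pstep p) xs (length xs) = (ct xs - int p * cf xs, ct xs + cf xs)"
      by (simp add: vtx_take sum_pstep_fst sum_pstep_snd)
    moreover have "ct xs - int p * cf xs = int m - int p * int n \<and> ct xs + cf xs = int m + int n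
        \<longleftrightarrow> ct xs = int m \<and> cf xs = int n"
    proof
      assume h: "ct xs - int p * cf xs = int m - int p * int n \<and> ct xs + cf xs = int m + int n"
      hence "(int p + 1) * cf xs = (int p + 1) * int n" by (simp add: algebra_simps)
      hence "cf xs = int n" using assms by simp
      thus "ct xs = int m \<and> cf xs = int n" using h by simp
    qed auto
    ultimately show ?thesis using ct_cf_len[of xs] by auto
  qed
  show ?thesis
  proof (rule set_eqI)
    fix xs
    have "xs \<in> {xs \<in> paths_to (pstep p) (int m - int p * int n, int m + int n).
                 \<not> meets_vline (pstep p) (int c) xs} \<longleftrightarrow>
        (length xs = m + n \<and> ct xs = int m) \<and> (\<forall>k\<le>length xs. fst (vtx (pstep p) xs k) < int c)"
      unfolding paths_to_def mem_Collect_eq end_iff meets_iff[of "int c", OF of_nat_0_less_iff[THEN iffD2, OF assms(2)]]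
      by blast
    also have "\<dots> \<longleftrightarrow> xs \<in> PA p m n c"
      unfolding PA_def mem_Collect_eq by (auto simp: vtx_take sum_pstep_fst)
    finally show "xs \<in> {xs \<in> paths_to (pstep p) (int m - int p * int n, int m + int n).
                 \<not> meets_vline (pstep p) (int c) xs} \<longleftrightarrow> xs \<in> PA p m n c" .
  qed
qed

lemma B_eq:
  "Lpaths p (int c + int p * int n - int m) n m = PB p m n c"
proof -
  have end_iff: "vtx ustep xs (length xs) = (int n, int m)
     \<longleftrightarrow> length xs = m + n \<and> ct xs = int n" for xs
    using ct_cf_len[of xs] by (auto simp: vtx_take sum_ustep_fst sum_ustep_snd)
  show ?thesis
  proof (rule set_eqI)
    fix xs
    have "xs \<in> Lpaths p (int c + int p * int n - int m) n m \<longleftrightarrow>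
        (length xs = m + n \<and> ct xs = int n) \<and> (\<forall>k\<le>length xs. snd (vtx ustep xs k) > int p * fst (vtx ustep xs k) - (int c + int p * int n - int m))"
      unfolding Lpaths_def paths_to_def mem_Collect_eq end_iff by blast
    also have "\<dots> \<longleftrightarrow> xs \<in> PB p m n c"
      unfolding PB_def mem_Collect_eq by (auto simp: vtx_take sum_ustep_fst sum_ustep_snd)
    finally show "xs \<in> Lpaths p (int c + int p * int n - int m) n m \<longleftrightarrow> xs \<in> PB p m n c" .
  qed
qed

lemma ct_take_drop: "ct (take j xs) + ct (drop j xs) = ct xs"
  unfolding ct_def by (metis append_take_drop_id filter_append length_append of_nat_add)
lemma cf_take_drop: "cf (take j xs) + cf (drop j xs) = cf xs"
  unfolding cf_def by (metis append_take_drop_id filter_append length_append of_nat_add)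

lemma ct_mapnot: "ct (map Not xs) = cf xs"
  unfolding ct_def cf_def by (induction xs) auto
lemma cf_mapnot: "cf (map Not xs) = ct xs"
  unfolding ct_def cf_def by (induction xs) auto
lemma ct_rev: "ct (rev xs) = ct xs" unfolding ct_def by (metis length_rev rev_filter)
lemma cf_rev: "cf (rev xs) = cf xs" unfolding cf_def by (metis length_rev rev_filter)

lemma take_g: "k \<le> length xs \<Longrightarrow> take k (map Not (rev xs)) = map Not (rev (drop (length xs - k) xs))"
  by (simp add: take_map take_rev)


lemma gg: "map Not (rev (map Not (rev xs))) = xs"
  by (simp add: rev_map comp_def)

lemma PA_to_PB:
  assumes "xs \<in> PA p m n c"
  shows "map Not (rev xs) \<in> PB p m n c"
proof -
  have L: "length xs = m + n" and T: "ct xs = int m"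
    and P: "\<forall>j\<le>m+n. ct (take j xs) - int p * cf (take j xs) < int c"
    using assms unfolding PA_def by auto
  have F: "cf xs = int n" using ct_cf_len[of xs] L T by simp
  have "cf (take k (map Not (rev xs))) > int p * ct (take k (map Not (rev xs))) - (int c + int p * int n - int m)"
    if k: "k \<le> m + n" for k
  proof -
    define j where "j = m + n - k"
    have j: "j \<le> m + n" unfolding j_def by simp
    have e1: "cf (take k (map Not (rev xs))) = ct (drop j xs)"
      using take_g[of k xs] k L unfolding j_def by (simp add: cf_mapnot ct_rev)
    have e2: "ct (take k (map Not (rev xs))) = cf (drop j xs)"
      using take_g[of k xs] k L unfolding j_def by (simp add: ct_mapnot cf_rev)
    have "ct (take j xs) - int p * cf (take j xs) < int c" using P j by blast
    moreover have "ct (drop j xs) = int m - ct (take j xs)" using ct_take_drop[of j xs] T by simp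
    moreover have "cf (drop j xs) = int n - cf (take j xs)" using cf_take_drop[of j xs] F by simp
    moreover have "int p * cf (drop j xs) = int p * int n - int p * cf (take j xs)"
    proof -
      have "cf (drop j xs) = int n - cf (take j xs)" using cf_take_drop[of j xs] F by simp
      then show ?thesis by (simp add: right_diff_distrib)
    qed
    ultimately show ?thesis unfolding e1 e2 by linarith
  qed
  moreover have "ct (map Not (rev xs)) = int n" using F by (simp add: ct_mapnot cf_rev)
  moreover have "length (map Not (rev xs)) = m + n" using L by simp
  ultimately show ?thesis unfolding PB_def mem_Collect_eq by blast
qed

lemma PB_to_PA:
  assumes "ys \<in> PB p m n c"
  shows "map Not (rev ys) \<in> PA p m n c"
proof -
  have L: "length ys = m + n" and T: "ct ys = int n"
    and P: "\<forall>k\<le>m+n. cf (take k ys) > int p * ct (take k ys) - (int c + int p * int n - int m)"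
    using assms unfolding PB_def by auto
  have F: "cf ys = int m" using ct_cf_len[of ys] L T by simp
  have "ct (take j (map Not (rev ys))) - int p * cf (take j (map Not (rev ys))) < int c"
    if j: "j \<le> m + n" for j
  proof -
    define k where "k = m + n - j"
    have k: "k \<le> m + n" unfolding k_def by simp
    have e1: "ct (take j (map Not (rev ys))) = cf (drop k ys)"
      using take_g[of j ys] j L unfolding k_def by (simp add: ct_mapnot cf_rev)
    have e2: "cf (take j (map Not (rev ys))) = ct (drop k ys)"
      using take_g[of j ys] j L unfolding k_def by (simp add: cf_mapnot ct_rev)
    have "cf (take k ys) > int p * ct (take k ys) - (int c + int p * int n - int m)" using P k by blast
    moreover have "ct (drop k ys) = int n - ct (take k ys)" using ct_take_drop[of k ys] T by simp
    moreover have "cf (drop k ys) = int m - cf (take k ys)" using cf_take_drop[of k ys] F by simp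
    moreover have "int p * ct (drop k ys) = int p * int n - int p * ct (take k ys)"
    proof -
      have "ct (drop k ys) = int n - ct (take k ys)" using ct_take_drop[of k ys] T by simp
      then show ?thesis by (simp add: right_diff_distrib)
    qed
    ultimately show ?thesis unfolding e1 e2 by linarith
  qed
  moreover have "ct (map Not (rev ys)) = int m" using F by (simp add: ct_mapnot cf_rev)
  moreover have "length (map Not (rev ys)) = m + n" using L by simp
  ultimately show ?thesis unfolding PA_def mem_Collect_eq by blast
qed

theorem theorem3p1:
  fixes m n p c :: nat
  assumes "0 < m" and "0 < n" and "0 < p" and "0 < c"
  shows "card {xs \<in> paths_to (pstep p) (int m - int p * int n, int m + int n).
                 \<not> meets_vline (pstep p) (int c) xs}
         = card (Lpaths p (int c + int p * int n - int m) n m)"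
proof -
  have "bij_betw (\<lambda>xs. map Not (rev xs)) (PA p m n c) (PB p m n c)"
  proof (rule bij_betw_byWitness[where f'="\<lambda>xs. map Not (rev xs)"])
    show "\<forall>a\<in>PA p m n c. map Not (rev (map Not (rev a))) = a" using gg by blast
    show "\<forall>a\<in>PB p m n c. map Not (rev (map Not (rev a))) = a" using gg by blast
    show "(\<lambda>xs. map Not (rev xs)) ` PA p m n c \<subseteq> PB p m n c" using PA_to_PB by blast
    show "(\<lambda>xs. map Not (rev xs)) ` PB p m n c \<subseteq> PA p m n c" using PB_to_PA by blast
  qed
  then have "card (PA p m n c) = card (PB p m n c)" by (rule bij_betw_same_card)
  then show ?thesis using A_eq[OF assms(3,4)] B_eq by simp
qed

end
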